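(* Let $c>0$, $f_s>0$, let $M,N,K\ge1$ be integers, set $T_{\max}=(N-1)/f_s$, and let $\bm{r}^{\mathrm{mic}}_1,\dots,\bm{r}^{\mathrm{mic}}_M\in\mathbb{R}^3$ with $E_M=\{\bm{r}^{\mathrm{mic}}_m\}$. Let $\kappa:\mathbb{R}\to\mathbb{R}$ be continuous with $\kappa(0)>0$ and $\lim_{|t|\to+\infty}\kappa(t)=0$, and assume $$\forall \tau\in\Big[0,\frac{N-1}{f_s}\Big],\qquad \sum_{n=0}^{N-1}\kappa(n/f_s-\tau)>0.$$ Then $\Gamma^K$ is amplitude lower-bounded, i.e. there is $C>0$ with $\|\Gamma^K(\bm{a},\bm{r})\|_2\ge C\sum_{k=1}^K a_k$ for all $(\bm{a},\bm{r})\in\mathbb{R}_+^K\times\mathscr{C}^K$.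
   Context: $\mathbb{R}_+=[0,+\infty)$, $\|\cdot\|_2$ is the Euclidean norm. For $\bm{r}\in\mathbb{R}^3\setminus E_M$, $\gamma(\bm{r})\in\mathbb{R}^{MN}$ has components $\gamma_{m,n}(\bm{r})=\dfrac{\kappa\big(n/f_s-\|\bm{r}-\bm{r}^{\mathrm{mic}}_m\|_2/c\big)}{4\pi\|\bm{r}-\bm{r}^{\mathrm{mic}}_m\|_2}$, $1\le m\le M$, $0\le n\le N-1$. $\mathscr{C}=\bigcap_{m=1}^M\overline{B(\bm{r}^{\mathrm{mic}}_m,cT_{\max})}\setminus E_M$. $\Gamma^K(\bm{a},\bm{r})=\sum_{k=1}^K a_k\gamma(\bm{r}_k)$ for $\bm{a}\in\mathbb{R}_+^K$, $\bm{r}=(\bm{r}_1,\dots,\bm{r}_K)\in\mathscr{C}^K$. *)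

theory Defs
  imports "HOL-Analysis.Analysis"
begin

text \<open>Component gamma_{m,n}(r) of the vector gamma(r) in R^{MN}.
  Microphones are indexed m = 1..M, time samples n = 0..N-1.\<close>
definition gamma_comp ::
  "(real \<Rightarrow> real) \<Rightarrow> real \<Rightarrow> real \<Rightarrow> (nat \<Rightarrow> real^3) \<Rightarrow> real^3 \<Rightarrow> nat \<Rightarrow> nat \<Rightarrow> real" where
  "gamma_comp \<kappa> c fs rmic r m n =
     \<kappa> (real n / fs - norm (r - rmic m) / c) / (4 * pi * norm (r - rmic m))"

definition GammaK_comp ::
  "(real \<Rightarrow> real) \<Rightarrow> real \<Rightarrow> real \<Rightarrow> (nat \<Rightarrow> real^3) \<Rightarrow> nat \<Rightarrow> (nat \<Rightarrow> real) \<Rightarrow> (nat \<Rightarrow> real^3) \<Rightarrow> nat \<Rightarrow> nat \<Rightarrow> real" where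
  "GammaK_comp \<kappa> c fs rmic K a r m n = (\<Sum>k\<in>{1..K}. a k * gamma_comp \<kappa> c fs rmic (r k) m n)"

definition normMN :: "nat \<Rightarrow> nat \<Rightarrow> (nat \<Rightarrow> nat \<Rightarrow> real) \<Rightarrow> real" where
  "normMN M N v = sqrt (\<Sum>m\<in>{1..M}. \<Sum>n\<in>{0..<N}. (v m n)^2)"

definition micset :: "nat \<Rightarrow> (nat \<Rightarrow> real^3) \<Rightarrow> (real^3) set" where
  "micset M rmic = rmic ` {1..M}"

text \<open>The admissible source region: intersection of closed balls of radius c T_max
  around the microphones, minus the microphone positions.\<close>
definition admissible :: "nat \<Rightarrow> (nat \<Rightarrow> real^3) \<Rightarrow> real \<Rightarrow> (real^3) set" where
  "admissible M rmic R = (\<Inter>m\<in>{1..M}. cball (rmic m) R) - micset M rmic"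

end

theory Submission
  imports Defs
begin

lemma norm_ge_comp:
  fixes v :: "nat \<Rightarrow> nat \<Rightarrow> real"
  assumes "M \<ge> 1" "n < N"
  shows "\<bar>v 1 n\<bar> \<le> normMN M N v"
proof -
  have "(v 1 n)^2 \<le> (\<Sum>n\<in>{0..<N}. (v 1 n)^2)"
    using assms by (intro member_le_sum) auto
  also have "\<dots> \<le> (\<Sum>m\<in>{1..M}. \<Sum>n\<in>{0..<N}. (v m n)^2)"
    using assms by (intro member_le_sum[where f="\<lambda>m. \<Sum>n\<in>{0..<N}. (v m n)^2"])
       (auto intro: sum_nonneg)
  finally show ?thesis unfolding normMN_def using real_le_rsqrt by (metis real_sqrt_abs real_sqrt_le_mono)
qed

lemma norm_ge_sum:
  fixes v :: "nat \<Rightarrow> nat \<Rightarrow> real"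
  assumes "M \<ge> 1"
  shows "(\<Sum>n\<in>{0..<N}. v 1 n) \<le> real N * normMN M N v"
proof -
  have "(\<Sum>n\<in>{0..<N}. v 1 n) \<le> (\<Sum>n\<in>{0..<N}. normMN M N v)"
    using norm_ge_comp[OF assms] by (intro sum_mono) (smt (verit) atLeastLessThan_iff)
  then show ?thesis by simp
qed

theorem proposition2:
  fixes c fs :: real and M N K :: nat and rmic :: "nat \<Rightarrow> real^3" and \<kappa> :: "real \<Rightarrow> real"
  assumes "c > 0" and "fs > 0" and "M \<ge> 1" and "N \<ge> 1" and "K \<ge> 1"
    and "continuous_on UNIV \<kappa>" and "\<kappa> 0 > 0"
    and "(\<kappa> \<longlongrightarrow> 0) at_infinity"
    and "\<forall>\<tau>\<in>{0..(real N - 1) / fs}. (\<Sum>n\<in>{0..<N}. \<kappa> (real n / fs - \<tau>)) > 0"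
  shows "\<exists>C>0. \<forall>a r. (\<forall>k\<in>{1..K}. a k \<ge> 0) \<and>
            (\<forall>k\<in>{1..K}. r k \<in> admissible M rmic (c * ((real N - 1) / fs))) \<longrightarrow>
            normMN M N (GammaK_comp \<kappa> c fs rmic K a r) \<ge> C * (\<Sum>k\<in>{1..K}. a k)"
proof (cases "N = 1")
  case True
  have "admissible M rmic (c * ((real N - 1) / fs)) = {}"
    using True assms(3) unfolding admissible_def micset_def by (auto, metis atLeastAtMost_iff image_eqI order_refl)
  then show ?thesis using assms(5) by (intro exI[of _ 1]) auto
next
  case False
  define T where "T = (real N - 1) / fs"
  have T: "T > 0" using False assms(2,4) unfolding T_def by auto
  define S where "S = (\<lambda>\<tau>. \<Sum>n\<in>{0..<N}. \<kappa> (real n / fs - \<tau>))"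
  have contS: "continuous_on {0..T} S" unfolding S_def
    by (intro continuous_intros continuous_on_compose2[OF assms(6)]) auto
  obtain t0 where t0: "t0 \<in> {0..T}" "\<And>t. t \<in> {0..T} \<Longrightarrow> S t0 \<le> S t"
    using continuous_attains_inf[OF compact_Icc _ contS] T by fastforce
  define \<mu> where "\<mu> = S t0"
  have mu: "\<mu> > 0" using assms(9) t0(1) unfolding \<mu>_def S_def T_def by auto
  define B where "B = \<mu> / (4 * pi * (c * T))"
  have B: "B > 0" unfolding B_def using mu T assms(1) by auto
  have g: "(\<Sum>n\<in>{0..<N}. gamma_comp \<kappa> c fs rmic x 1 n) \<ge> B"
    if x: "x \<in> admissible M rmic (c * T)" for x
  proof -
    define d where "d = norm (x - rmic 1)"
    have "x \<noteq> rmic 1" using x assms(3) unfolding admissible_def micset_def by auto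
    then have d0: "d > 0" unfolding d_def by auto
    have "x \<in> cball (rmic 1) (c * T)" using x assms(3) unfolding admissible_def by auto
    then have dle: "d \<le> c * T" unfolding d_def by (simp add: dist_norm norm_minus_commute)
    have tau: "d / c \<in> {0..T}" using d0 dle assms(1) by (auto simp: field_simps)
    have "(\<Sum>n\<in>{0..<N}. gamma_comp \<kappa> c fs rmic x 1 n) = S (d / c) / (4 * pi * d)"
      unfolding gamma_comp_def S_def d_def by (simp add: sum_divide_distrib)
    moreover have "\<mu> \<le> S (d / c)" using t0(2)[OF tau] unfolding \<mu>_def .
    moreover have "\<mu> / (4 * pi * (c * T)) \<le> S (d / c) / (4 * pi * d)"
    proof (rule frac_le)
      show "0 \<le> S (d / c)" using \<open>\<mu> \<le> S (d / c)\<close> mu by linarith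
      show "\<mu> \<le> S (d / c)" by fact
      show "0 < 4 * pi * d" using d0 by simp
      show "4 * pi * d \<le> 4 * pi * (c * T)" using dle by simp
    qed
    ultimately show ?thesis unfolding B_def by linarith
  qed
  show ?thesis
  proof (intro exI[of _ "B / real N"] conjI allI impI)
    show "B / real N > 0" using B assms(4) by auto
    fix a :: "nat \<Rightarrow> real" and r :: "nat \<Rightarrow> real^3"
    assume h: "(\<forall>k\<in>{1..K}. 0 \<le> a k) \<and> (\<forall>k\<in>{1..K}. r k \<in> admissible M rmic (c * ((real N - 1) / fs)))"
    have "B * (\<Sum>k\<in>{1..K}. a k) = (\<Sum>k\<in>{1..K}. a k * B)" by (simp add: sum_distrib_left mult.commute)
    also have "\<dots> \<le> (\<Sum>k\<in>{1..K}. a k * (\<Sum>n\<in>{0..<N}. gamma_comp \<kappa> c fs rmic (r k) 1 n))"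
    proof (rule sum_mono)
      fix k assume k: "k \<in> {1..K}"
      have "r k \<in> admissible M rmic (c * T)" using h k unfolding T_def by blast
      then have "B \<le> (\<Sum>n\<in>{0..<N}. gamma_comp \<kappa> c fs rmic (r k) 1 n)" by (rule g)
      then show "a k * B \<le> a k * (\<Sum>n\<in>{0..<N}. gamma_comp \<kappa> c fs rmic (r k) 1 n)"
        using h k by (intro mult_left_mono) auto
    qed
    also have "\<dots> = (\<Sum>n\<in>{0..<N}. GammaK_comp \<kappa> c fs rmic K a r 1 n)"
      unfolding GammaK_comp_def sum_distrib_left by (rule sum.swap)
    also have "\<dots> \<le> real N * normMN M N (GammaK_comp \<kappa> c fs rmic K a r)"
      by (rule norm_ge_sum[OF assms(3)])
    finally have "B * (\<Sum>k\<in>{1..K}. a k) \<le> real N * normMN M N (GammaK_comp \<kappa> c fs rmic K a r)" .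
    moreover have "real N > 0" using assms(4) by auto
    ultimately show "B / real N * (\<Sum>k\<in>{1..K}. a k) \<le> normMN M N (GammaK_comp \<kappa> c fs rmic K a r)"
      by (simp add: divide_le_eq mult.commute)
  qed
qed

end
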